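(* Let $(X,\tau)$ be a topological space and $A\subseteq X$. Then $A$ is statistically compact in $(X,\tau)$ if and only if $A$ is statistically compact in $(X,\tau_{ST})$.
   Context: For $A\subseteq\mathbb{N}$ let $d_n(A)=|A\cap\{1,\dots,n\}|/n$, $\overline{d}(A)=\limsup_n d_n(A)$, $\underline{d}(A)=\liminf_n d_n(A)$, and $d(A)$ their common value when equal. A sequence in $X$ is a map from an infinite subset $M\subseteq\mathbb{N}$ into $X$, written $(x_n)_{n\in M}$; a subsequence is $(x_n)_{n\in N}$ with $N\subseteq M$ infinite. It is nonthin if $\overline{d}(M)>0$. A nonthin sequence $(x_n)_{n\in M}$ is statistically convergent to $a\in X$ if for every open $U\ni a$, $d(\{n\in M:x_n\notin U\})=0$. The statistical closure $\overline{F}^{ST}$ of $F\subseteq X$ is the set of $x\in X$ such that some nonthin sequence in $F$ is statistically convergent to $x$; $F$ is statistically closed if $\overline{F}^{ST}=F$. $\tau_{ST}=\{F\subseteq X: X\setminus F$ is statistically closed in $(X,\tau)\}$; this is a topology on $X$ containing $\tau$. A topological space is statistically compact if every nonthin sequence in it has a nonthin subsequence that is statistically convergent to some point of the space; a subset is statistically compact if it is so in the subspace topology. *)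

theory Defs
  imports "HOL-Analysis.Analysis" "HOL-Library.Liminf_Limsup"
begin

definition dens_n :: "nat set \<Rightarrow> nat \<Rightarrow> real" where
  "dens_n A n = real (card (A \<inter> {1..n})) / real n"

definition upper_density :: "nat set \<Rightarrow> ereal" where
  "upper_density A = limsup (\<lambda>n. ereal (dens_n A n))"

definition density_zero :: "nat set \<Rightarrow> bool" where
  "density_zero A \<longleftrightarrow> (dens_n A \<longlonglongrightarrow> 0)"

definition nonthin :: "nat set \<Rightarrow> bool" where
  "nonthin M \<longleftrightarrow> infinite M \<and> upper_density M > 0"

text \<open>A sequence is a pair (M, s): infinite index set M and values s n for n in M.
  Nonthin sequence (M,s) statistically convergent to a in topology T.\<close>
definition stat_conv :: "'a topology \<Rightarrow> nat set \<Rightarrow> (nat \<Rightarrow> 'a) \<Rightarrow> 'a \<Rightarrow> bool" where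
  "stat_conv T M s a \<longleftrightarrow> nonthin M \<and> a \<in> topspace T \<and> s ` M \<subseteq> topspace T \<and>
     (\<forall>U. openin T U \<and> a \<in> U \<longrightarrow> density_zero {n \<in> M. s n \<notin> U})"

definition stat_closure :: "'a topology \<Rightarrow> 'a set \<Rightarrow> 'a set" where
  "stat_closure T F = {x \<in> topspace T. \<exists>M s. nonthin M \<and> s ` M \<subseteq> F \<and> stat_conv T M s x}"

definition stat_closed :: "'a topology \<Rightarrow> 'a set \<Rightarrow> bool" where
  "stat_closed T F \<longleftrightarrow> stat_closure T F = F"

definition tau_ST :: "'a topology \<Rightarrow> 'a topology" where
  "tau_ST T = topology (\<lambda>U. U \<subseteq> topspace T \<and> stat_closed T (topspace T - U))"

definition stat_compact_space :: "'a topology \<Rightarrow> bool" where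
  "stat_compact_space T \<longleftrightarrow>
     (\<forall>M s. nonthin M \<and> s ` M \<subseteq> topspace T \<longrightarrow>
        (\<exists>N a. N \<subseteq> M \<and> nonthin N \<and> a \<in> topspace T \<and> stat_conv T N s a))"

definition stat_compact_in :: "'a topology \<Rightarrow> 'a set \<Rightarrow> bool" where
  "stat_compact_in T A \<longleftrightarrow> stat_compact_space (subtopology T A)"

end

theory Submission
  imports Defs
begin

lemma dens_nonneg: "dens_n A n \<ge> 0" by (simp add: dens_n_def)

lemma density_zero_subset:
  assumes "A \<subseteq> B" "density_zero B" shows "density_zero A"
  unfolding density_zero_def
proof (rule tendsto_sandwich[of "\<lambda>n. 0" _ _ "dens_n B"])
  show "\<forall>\<^sub>F n in sequentially. 0 \<le> dens_n A n" by (simp add: dens_nonneg)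
  show "\<forall>\<^sub>F n in sequentially. dens_n A n \<le> dens_n B n"
  proof (intro always_eventually allI)
    fix n
    have "card (A \<inter> {1..n}) \<le> card (B \<inter> {1..n})" using assms(1) by (intro card_mono) auto
    then show "dens_n A n \<le> dens_n B n" unfolding dens_n_def by (simp add: divide_right_mono)
  qed
qed (use assms in \<open>auto simp: density_zero_def\<close>)

lemma density_zero_Un:
  assumes "density_zero A" "density_zero B" shows "density_zero (A \<union> B)"
  unfolding density_zero_def
proof (rule tendsto_sandwich[of "\<lambda>n. 0" _ _ "\<lambda>n. dens_n A n + dens_n B n"])
  show "\<forall>\<^sub>F n in sequentially. 0 \<le> dens_n (A \<union> B) n" by (simp add: dens_nonneg)
  show "\<forall>\<^sub>F n in sequentially. dens_n (A \<union> B) n \<le> dens_n A n + dens_n B n"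
  proof (intro always_eventually allI)
    fix n
    have "card ((A \<union> B) \<inter> {1..n}) \<le> card (A \<inter> {1..n}) + card (B \<inter> {1..n})"
      by (metis Int_Un_distrib2 card_Un_le)
    then have "real (card ((A \<union> B) \<inter> {1..n})) \<le> real (card (A \<inter> {1..n})) + real (card (B \<inter> {1..n}))"
      by linarith
    then show "dens_n (A \<union> B) n \<le> dens_n A n + dens_n B n" unfolding dens_n_def
      by (metis add_divide_distrib divide_right_mono of_nat_0_le_iff)
  qed
  show "(\<lambda>n. dens_n A n + dens_n B n) \<longlonglongrightarrow> 0"
    using tendsto_add[OF assms[unfolded density_zero_def]] by simp
qed simp

lemma finite_density_zero:
  assumes "finite A" shows "density_zero A"
  unfolding density_zero_def
proof (rule tendsto_sandwich[of "\<lambda>n. 0" _ _ "\<lambda>n. real (card A) / real n"])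
  show "\<forall>\<^sub>F n in sequentially. 0 \<le> dens_n A n" by (simp add: dens_nonneg)
  show "\<forall>\<^sub>F n in sequentially. dens_n A n \<le> real (card A) / real n"
  proof (intro always_eventually allI)
    fix n
    have "card (A \<inter> {1..n}) \<le> card A" using assms by (intro card_mono) auto
    then show "dens_n A n \<le> real (card A) / real n" unfolding dens_n_def by (simp add: divide_right_mono)
  qed
  show "(\<lambda>n. real (card A) / real n) \<longlonglongrightarrow> 0"
    by (rule tendsto_divide_0[OF tendsto_const]) (simp add: filterlim_real_sequentially filterlim_at_top_imp_at_infinity)
qed simp

lemma nonthin_iff: "nonthin M \<longleftrightarrow> \<not> density_zero M"
proof
  assume "nonthin M"
  then have "upper_density M > 0" by (simp add: nonthin_def)
  then show "\<not> density_zero M"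
    unfolding density_zero_def upper_density_def
    using lim_imp_Limsup[of sequentially "\<lambda>n. ereal (dens_n M n)" 0] lim_ereal[of "dens_n M" 0 sequentially]
    by (auto simp: zero_ereal_def)
next
  assume nz: "\<not> density_zero M"
  then have "infinite M" using finite_density_zero by blast
  moreover have "upper_density M > 0"
  proof (rule ccontr)
    assume "\<not> upper_density M > 0"
    then have le: "limsup (\<lambda>n. ereal (dens_n M n)) \<le> 0" by (simp add: upper_density_def)
    have ge: "0 \<le> liminf (\<lambda>n. ereal (dens_n M n))"
      by (intro Liminf_bounded) (simp add: dens_nonneg)
    have "liminf (\<lambda>n. ereal (dens_n M n)) \<le> limsup (\<lambda>n. ereal (dens_n M n))"
      by (rule Liminf_le_Limsup) simp
    then have "((\<lambda>n. ereal (dens_n M n)) \<longlonglongrightarrow> ereal 0)"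
      using le ge by (subst tendsto_iff_Liminf_eq_Limsup) (auto simp: zero_ereal_def)
    then show False using nz by (simp add: density_zero_def)
  qed
  ultimately show "nonthin M" by (simp add: nonthin_def)
qed

lemma nonthin_UNIV: "nonthin UNIV"
proof -
  have "eventually (\<lambda>n. dens_n UNIV n = 1) sequentially"
    using eventually_ge_at_top[of 1] by eventually_elim (simp add: dens_n_def)
  then have "dens_n UNIV \<longlonglongrightarrow> 1" by (rule tendsto_eventually)
  then show ?thesis unfolding nonthin_iff density_zero_def using LIMSEQ_unique by fastforce
qed

lemma stat_conv_sub:
  assumes "stat_conv T M s x" "N \<subseteq> M" "nonthin N" shows "stat_conv T N s x"
  unfolding stat_conv_def
proof (intro conjI allI impI)
  fix U assume U: "openin T U \<and> x \<in> U"
  have "density_zero {n \<in> M. s n \<notin> U}" using assms(1) U unfolding stat_conv_def by blast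
  moreover have "{n \<in> N. s n \<notin> U} \<subseteq> {n \<in> M. s n \<notin> U}" using assms(2) by blast
  ultimately show "density_zero {n \<in> N. s n \<notin> U}" using density_zero_subset by blast
next
  show "nonthin N" by (rule assms(3))
  show "x \<in> topspace T" using assms(1) unfolding stat_conv_def by blast
  show "s ` N \<subseteq> topspace T" using assms(1,2) unfolding stat_conv_def by blast
qed

lemma stat_closure_top: "stat_closure T F \<subseteq> topspace T"
  by (auto simp: stat_closure_def)

lemma stat_closure_inc:
  assumes "F \<subseteq> topspace T" shows "F \<subseteq> stat_closure T F"
proof
  fix x assume x: "x \<in> F"
  have "density_zero {n \<in> UNIV. x \<notin> U}" if "x \<in> U" for U
    using that finite_density_zero[of "{}"] by simp
  moreover have xt: "x \<in> topspace T" using x assms by blast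
  ultimately have c: "stat_conv T UNIV (\<lambda>n. x) x"
    using nonthin_UNIV unfolding stat_conv_def by simp
  have r: "(\<lambda>n. x) ` UNIV \<subseteq> F" using x by auto
  have "nonthin UNIV \<and> (\<lambda>n. x) ` UNIV \<subseteq> F \<and> stat_conv T UNIV (\<lambda>n. x) x"
    using nonthin_UNIV r c by blast
  then have "\<exists>M s. nonthin M \<and> s ` M \<subseteq> F \<and> stat_conv T M s x" by (intro exI)
  then show "x \<in> stat_closure T F" using xt unfolding stat_closure_def by simp
qed

lemma stat_closure_mono: "F \<subseteq> G \<Longrightarrow> stat_closure T F \<subseteq> stat_closure T G"
  unfolding stat_closure_def by blast

lemma closed_stat_closed:
  assumes "closedin T F" shows "stat_closed T F"
proof -
  have F: "F \<subseteq> topspace T" using assms closedin_subset by blast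
  have "stat_closure T F \<subseteq> F"
  proof
    fix x assume "x \<in> stat_closure T F"
    then obtain M s where x: "x \<in> topspace T" and M: "nonthin M" "s ` M \<subseteq> F" "stat_conv T M s x"
      unfolding stat_closure_def by blast
    show "x \<in> F"
    proof (rule ccontr)
      assume "x \<notin> F"
      then have o: "openin T (topspace T - F)" "x \<in> topspace T - F"
        using assms x by (simp_all add: closedin_def)
      have "\<forall>U. openin T U \<and> x \<in> U \<longrightarrow> density_zero {n \<in> M. s n \<notin> U}"
        using M(3) unfolding stat_conv_def by (elim conjE)
      then have "density_zero {n \<in> M. s n \<notin> topspace T - F}" using o by blast
      moreover have "{n \<in> M. s n \<notin> topspace T - F} = M" using M(2) by auto
      ultimately show False using M(1) by (simp add: nonthin_iff)
    qed
  qed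
  then show ?thesis using stat_closure_inc[OF F] unfolding stat_closed_def by blast
qed

lemma stat_closed_Un:
  assumes "stat_closed T F" "stat_closed T G" shows "stat_closed T (F \<union> G)"
proof -
  have F: "F \<subseteq> topspace T" "G \<subseteq> topspace T"
    using assms stat_closure_top unfolding stat_closed_def by metis+
  have "stat_closure T (F \<union> G) \<subseteq> F \<union> G"
  proof
    fix x assume "x \<in> stat_closure T (F \<union> G)"
    then obtain M s where x: "x \<in> topspace T" and M: "nonthin M" "s ` M \<subseteq> F \<union> G" "stat_conv T M s x"
      unfolding stat_closure_def by blast
    define M1 where "M1 = {n \<in> M. s n \<in> F}"
    define M2 where "M2 = {n \<in> M. s n \<in> G}"
    have "M = M1 \<union> M2" using M(2) unfolding M1_def M2_def by auto
    then have "nonthin M1 \<or> nonthin M2" using M(1) density_zero_Un nonthin_iff by metis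
    then show "x \<in> F \<union> G"
    proof
      assume n1: "nonthin M1"
      have "M1 \<subseteq> M" by (auto simp: M1_def)
      then have c: "stat_conv T M1 s x" using stat_conv_sub[OF M(3) _ n1] by blast
      have "s ` M1 \<subseteq> F" by (auto simp: M1_def)
      then have "\<exists>M s. nonthin M \<and> s ` M \<subseteq> F \<and> stat_conv T M s x" using n1 c by blast
      then have "x \<in> stat_closure T F" unfolding stat_closure_def using x by simp
      then show ?thesis using assms(1) unfolding stat_closed_def by blast
    next
      assume n1: "nonthin M2"
      have "M2 \<subseteq> M" by (auto simp: M2_def)
      then have c: "stat_conv T M2 s x" using stat_conv_sub[OF M(3) _ n1] by blast
      have "s ` M2 \<subseteq> G" by (auto simp: M2_def)
      then have "\<exists>M s. nonthin M \<and> s ` M \<subseteq> G \<and> stat_conv T M s x" using n1 c by blast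
      then have "x \<in> stat_closure T G" unfolding stat_closure_def using x by simp
      then show ?thesis using assms(2) unfolding stat_closed_def by blast
    qed
  qed
  then show ?thesis using stat_closure_inc[of "F \<union> G" T] F unfolding stat_closed_def by blast
qed

lemma stat_closed_Inter:
  assumes "\<And>F. F \<in> K \<Longrightarrow> stat_closed T F"
  shows "stat_closed T (topspace T \<inter> \<Inter>K)"
proof -
  have "stat_closure T (topspace T \<inter> \<Inter>K) \<subseteq> topspace T \<inter> \<Inter>K"
  proof -
    have "stat_closure T (topspace T \<inter> \<Inter>K) \<subseteq> F" if "F \<in> K" for F
    proof -
      have "topspace T \<inter> \<Inter>K \<subseteq> F" using that by (intro le_infI2 Inter_lower)
      then have "stat_closure T (topspace T \<inter> \<Inter>K) \<subseteq> stat_closure T F" by (rule stat_closure_mono)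
      then show ?thesis using assms[OF that] unfolding stat_closed_def by simp
    qed
    then show ?thesis by (intro Int_greatest Inter_greatest stat_closure_top)
  qed
  moreover have "topspace T \<inter> \<Inter>K \<subseteq> stat_closure T (topspace T \<inter> \<Inter>K)"
    by (rule stat_closure_inc) (rule Int_lower1)
  ultimately show ?thesis unfolding stat_closed_def by (rule equalityI)
qed

lemma openin_tau_ST:
  "openin (tau_ST T) = (\<lambda>U. U \<subseteq> topspace T \<and> stat_closed T (topspace T - U))"
proof -
  define P where "P = (\<lambda>U. U \<subseteq> topspace T \<and> stat_closed T (topspace T - U))"
  have i1: "P (S \<inter> U)" if a: "P S" "P U" for S U
  proof -
    have "topspace T - (S \<inter> U) = (topspace T - S) \<union> (topspace T - U)" by blast
    then show ?thesis using a stat_closed_Un unfolding P_def by auto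
  qed
  have i2: "P (\<Union>K)" if a: "\<forall>S\<in>K. P S" for K
  proof -
    have "topspace T - \<Union>K = topspace T \<inter> \<Inter>((\<lambda>S. topspace T - S) ` K)" by blast
    moreover have "stat_closed T (topspace T \<inter> \<Inter>((\<lambda>S. topspace T - S) ` K))"
      by (rule stat_closed_Inter) (use a in \<open>auto simp: P_def\<close>)
    ultimately show ?thesis using a by (auto simp: P_def)
  qed
  have "istopology P" unfolding istopology_def using i1 i2 by blast
  then show ?thesis unfolding tau_ST_def P_def[symmetric] by simp
qed

lemma topspace_tau_ST: "topspace (tau_ST T) = topspace T"
proof -
  have "stat_closure T {} = {}"
    unfolding stat_closure_def stat_conv_def nonthin_def by auto
  then have "stat_closed T {}" by (simp add: stat_closed_def)
  then have "openin (tau_ST T) (topspace T)" by (simp add: openin_tau_ST)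
  moreover have "openin (tau_ST T) U \<Longrightarrow> U \<subseteq> topspace T" for U by (simp add: openin_tau_ST)
  ultimately show ?thesis unfolding topspace_def by blast
qed

lemma stat_conv_tau_ST:
  assumes "s ` M \<subseteq> topspace T"
  shows "stat_conv (tau_ST T) M s a \<longleftrightarrow> stat_conv T M s a"
proof
  assume h: "stat_conv (tau_ST T) M s a"
  have "openin (tau_ST T) U" if "openin T U" for U
    using that closed_stat_closed[of T "topspace T - U"] openin_subset[OF that]
    by (auto simp: openin_tau_ST)
  then show "stat_conv T M s a" using h unfolding stat_conv_def topspace_tau_ST by blast
next
  assume h: "stat_conv T M s a"
  show "stat_conv (tau_ST T) M s a" unfolding stat_conv_def topspace_tau_ST
  proof (intro conjI allI impI)
    fix U assume U: "openin (tau_ST T) U \<and> a \<in> U"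
    show "density_zero {n \<in> M. s n \<notin> U}"
    proof (rule ccontr)
      assume "\<not> density_zero {n \<in> M. s n \<notin> U}"
      then have nt: "nonthin {n \<in> M. s n \<notin> U}" by (simp add: nonthin_iff)
      have c: "stat_conv T {n \<in> M. s n \<notin> U} s a" by (rule stat_conv_sub[OF h _ nt]) auto
      have r: "s ` {n \<in> M. s n \<notin> U} \<subseteq> topspace T - U" using assms by auto
      have at: "a \<in> topspace T" using h by (simp add: stat_conv_def)
      have "\<exists>N t. nonthin N \<and> t ` N \<subseteq> topspace T - U \<and> stat_conv T N t a"
        using nt r c by blast
      then have "a \<in> stat_closure T (topspace T - U)"
        unfolding stat_closure_def using at by simp
      then show False using U by (auto simp: openin_tau_ST stat_closed_def)
    qed
  next
    show "nonthin M" using h by (simp add: stat_conv_def)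
    show "a \<in> topspace T" using h by (simp add: stat_conv_def)
    show "s ` M \<subseteq> topspace T" by (rule assms)
  qed
qed

lemma stat_conv_subtopology:
  assumes "A \<subseteq> topspace S" "s ` M \<subseteq> A" "a \<in> A"
  shows "stat_conv (subtopology S A) M s a \<longleftrightarrow> stat_conv S M s a"
proof -
  have ts: "topspace (subtopology S A) = A" using assms(1) by auto
  have eq: "{n \<in> M. s n \<notin> U \<inter> A} = {n \<in> M. s n \<notin> U}" for U using assms(2) by auto
  have "(\<forall>V. openin (subtopology S A) V \<and> a \<in> V \<longrightarrow> density_zero {n \<in> M. s n \<notin> V}) \<longleftrightarrow>
        (\<forall>U. openin S U \<and> a \<in> U \<longrightarrow> density_zero {n \<in> M. s n \<notin> U})"
  proof (intro iffI allI impI)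
    fix U assume h: "\<forall>V. openin (subtopology S A) V \<and> a \<in> V \<longrightarrow> density_zero {n \<in> M. s n \<notin> V}"
      and U: "openin S U \<and> a \<in> U"
    then have "openin (subtopology S A) (U \<inter> A)" by (auto simp: openin_subtopology)
    then show "density_zero {n \<in> M. s n \<notin> U}" using h U assms(3) eq[of U] by auto
  next
    fix V assume h: "\<forall>U. openin S U \<and> a \<in> U \<longrightarrow> density_zero {n \<in> M. s n \<notin> U}"
      and V: "openin (subtopology S A) V \<and> a \<in> V"
    then obtain U where U: "openin S U" "V = U \<inter> A" by (auto simp: openin_subtopology)
    then show "density_zero {n \<in> M. s n \<notin> V}" using h V eq[of U] by auto
  qed
  moreover have "a \<in> topspace S" "s ` M \<subseteq> topspace S" using assms by blast+
  ultimately show ?thesis unfolding stat_conv_def ts using assms by blast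
qed

lemma compact_transfer:
  assumes ts: "topspace S1 = A" "topspace S2 = A"
    and key: "\<And>N s a. s ` N \<subseteq> A \<Longrightarrow> a \<in> A \<Longrightarrow> stat_conv S1 N s a \<Longrightarrow> stat_conv S2 N s a"
    and c: "stat_compact_space S1"
  shows "stat_compact_space S2"
  unfolding stat_compact_space_def
proof (intro allI impI)
  fix M s assume h2: "nonthin M \<and> s ` M \<subseteq> topspace S2"
  then have h1: "nonthin M \<and> s ` M \<subseteq> topspace S1" using ts by simp
  have "\<exists>N a. N \<subseteq> M \<and> nonthin N \<and> a \<in> topspace S1 \<and> stat_conv S1 N s a"
    using c[unfolded stat_compact_space_def, rule_format, OF h1] .
  then obtain N a where N: "N \<subseteq> M" "nonthin N" "a \<in> topspace S1" "stat_conv S1 N s a"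
    by blast
  have sN: "s ` N \<subseteq> A" using N(1) h2 ts by auto
  have aA: "a \<in> A" using N(3) ts by simp
  have "stat_conv S2 N s a" by (rule key[OF sN aA N(4)])
  then show "\<exists>N a. N \<subseteq> M \<and> nonthin N \<and> a \<in> topspace S2 \<and> stat_conv S2 N s a"
    using N(1,2) aA ts(2) by (intro exI[of _ N] exI[of _ a]) simp
qed

theorem mainTheorem15:
  fixes T :: "'a topology" and A :: "'a set"
  assumes "A \<subseteq> topspace T"
  shows "stat_compact_in T A \<longleftrightarrow> stat_compact_in (tau_ST T) A"
proof -
  have A2: "A \<subseteq> topspace (tau_ST T)" using assms by (simp add: topspace_tau_ST)
  have ts1: "topspace (subtopology T A) = A" using assms by auto
  have ts2: "topspace (subtopology (tau_ST T) A) = A" using A2 by auto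
  have key: "stat_conv (subtopology T A) N s a \<longleftrightarrow> stat_conv (subtopology (tau_ST T) A) N s a"
    if "s ` N \<subseteq> A" "a \<in> A" for N s a
  proof -
    have "s ` N \<subseteq> topspace T" using that assms by blast
    then show ?thesis
      using stat_conv_subtopology[OF assms that] stat_conv_subtopology[OF A2 that]
        stat_conv_tau_ST[of s N T a] by simp
  qed
  have k1: "stat_conv (subtopology T A) N s a \<Longrightarrow> stat_conv (subtopology (tau_ST T) A) N s a"
    if "s ` N \<subseteq> A" "a \<in> A" for N s a using key[OF that] by simp
  have k2: "stat_conv (subtopology (tau_ST T) A) N s a \<Longrightarrow> stat_conv (subtopology T A) N s a"
    if "s ` N \<subseteq> A" "a \<in> A" for N s a using key[OF that] by simp
  show ?thesis unfolding stat_compact_in_def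
    using compact_transfer[OF ts1 ts2 k1] compact_transfer[OF ts2 ts1 k2] by (intro iffI)
qed

end
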